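(* Let $b_0>0$. There exists $\delta_6(b_0)>0$ such that for all $\delta\in(0,\delta_6)$ there exists $s_6(\delta,b_0)\ge1$ such that for all $s_0\ge s_6$: if $(q,b)(s)\in V_{\delta,b_0}(s)$ for all $s\in[s_0,\bar s]$, then for all $s\in[s_0,\bar s]$, $$P_{2k}(\mathcal M(q))=\frac p{p-1}+O(I(s)^{-\delta}),\qquad P_n(\mathcal M(q))=O(I(s)^{-\delta})\ \text{ for }n\in\{0,\dots,[M]\},\ n\ne2k,$$ where $\mathcal M(q)=\frac p{p-1}y^{2k}(1+e_bq)$ with $b=b(s)$, and the $O(\cdot)$ constants are independent of $s$ and $s_0$.
   Context: Fix $p>1$ and an integer $k\ge2$. Let $I(s)=e^{\frac s2(1-\frac1k)}$, $M=\frac{2kp}{p-1}$, $[M]$ the largest integer less than $M$, $e_b(y)=(p-1+by^{2k})^{-1}$. Let $\rho_s(y)=\frac{I(s)}{\sqrt{4\pi}}e^{-I(s)^2y^2/4}$, $\langle f,g\rangle_{L^2_{\rho_s}}=\int fg\rho_s\,dy$, $H_m(y,s)=\sum_{\ell=0}^{[m/2]}\frac{m!}{\ell!(m-2\ell)!}(-I(s)^{-2})^\ell y^{m-2\ell}$; $P_m(g)=\langle g,H_m\rangle_{L^2_{\rho_s}}/\langle H_m,H_m\rangle_{L^2_{\rho_s}}$, $q_m=P_m(q)$, $q_-=q-\sum_{m=0}^{[M]}q_mH_m$, $|g|_s=\sup_y\frac{|g(y)|}{I(s)^{-M}+|y|^M}$. The shrinking set $V_{\delta,b_0}(s)$ is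 the set of pairs $(q,b)$ ($q$ with $(1+|y|^M)^{-1}q\in L^\infty$, $b\in\mathbb R$) with $|q_m|\le I(s)^{-\delta}$ for $0\le m\le[M]$, $m\ne2k$; $|q_{2k}|\le I(s)^{-2\delta}$; $|q_-|_s\le I(s)^{-\delta}$; and $\frac{b_0}2\le b\le2b_0$. *)

theory Defs
  imports "HOL-Analysis.Analysis"
begin

definition Ifun :: "nat \<Rightarrow> real \<Rightarrow> real" where
  "Ifun k s = exp (s / 2 * (1 - 1 / real k))"

definition Mexp :: "real \<Rightarrow> nat \<Rightarrow> real" where
  "Mexp p k = 2 * real k * p / (p - 1)"

text \<open>[M]: the largest integer strictly less than M (M > 0 here).\<close>
definition brM :: "real \<Rightarrow> nat \<Rightarrow> nat" where
  "brM p k = nat (\<lceil>Mexp p k\<rceil> - 1)"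

definition e_b :: "real \<Rightarrow> nat \<Rightarrow> real \<Rightarrow> real \<Rightarrow> real" where
  "e_b p k b y = 1 / (p - 1 + b * y ^ (2 * k))"

definition rho :: "nat \<Rightarrow> real \<Rightarrow> real \<Rightarrow> real" where
  "rho k s y = Ifun k s / sqrt (4 * pi) * exp (- (Ifun k s)\<^sup>2 * y\<^sup>2 / 4)"

definition Hm :: "nat \<Rightarrow> nat \<Rightarrow> real \<Rightarrow> real \<Rightarrow> real" where
  "Hm k m y s = (\<Sum>l = 0..m div 2.
      fact m / (fact l * fact (m - 2 * l)) * (- (1 / (Ifun k s)\<^sup>2)) ^ l * y ^ (m - 2 * l))"

definition inner_rho :: "nat \<Rightarrow> real \<Rightarrow> (real \<Rightarrow> real) \<Rightarrow> (real \<Rightarrow> real) \<Rightarrow> real" where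
  "inner_rho k s f g = (LINT y|lborel. f y * g y * rho k s y)"

definition Pm :: "nat \<Rightarrow> real \<Rightarrow> nat \<Rightarrow> (real \<Rightarrow> real) \<Rightarrow> real" where
  "Pm k s m g = inner_rho k s g (\<lambda>y. Hm k m y s) / inner_rho k s (\<lambda>y. Hm k m y s) (\<lambda>y. Hm k m y s)"

definition q_minus :: "real \<Rightarrow> nat \<Rightarrow> real \<Rightarrow> (real \<Rightarrow> real) \<Rightarrow> real \<Rightarrow> real" where
  "q_minus p k s q y = q y - (\<Sum>m = 0..brM p k. Pm k s m q * Hm k m y s)"

definition snorm :: "real \<Rightarrow> nat \<Rightarrow> real \<Rightarrow> (real \<Rightarrow> real) \<Rightarrow> ereal" where
  "snorm p k s g = (SUP y. ereal (\<bar>g y\<bar> / (Ifun k s powr (- Mexp p k) + \<bar>y\<bar> powr Mexp p k)))"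

definition inV :: "real \<Rightarrow> nat \<Rightarrow> real \<Rightarrow> real \<Rightarrow> real \<Rightarrow> (real \<Rightarrow> real) \<Rightarrow> real \<Rightarrow> bool" where
  "inV p k \<delta> b0 s q b \<longleftrightarrow>
     q \<in> borel_measurable borel \<and>
     (\<exists>B. \<forall>y. \<bar>q y\<bar> \<le> B * (1 + \<bar>y\<bar> powr Mexp p k)) \<and>
     (\<forall>m \<le> brM p k. m \<noteq> 2 * k \<longrightarrow> \<bar>Pm k s m q\<bar> \<le> Ifun k s powr (- \<delta>)) \<and>
     \<bar>Pm k s (2 * k) q\<bar> \<le> Ifun k s powr (- 2 * \<delta>) \<and>
     snorm p k s (q_minus p k s q) \<le> ereal (Ifun k s powr (- \<delta>)) \<and>
     b0 / 2 \<le> b \<and> b \<le> 2 * b0"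

definition Mq :: "real \<Rightarrow> nat \<Rightarrow> real \<Rightarrow> (real \<Rightarrow> real) \<Rightarrow> real \<Rightarrow> real" where
  "Mq p k b q y = p / (p - 1) * y ^ (2 * k) * (1 + e_b p k b y * q y)"

end

theory Submission
  imports Defs "HOL-Probability.Distributions"
begin

lemma Ifun_pos: "Ifun k s > 0" unfolding Ifun_def by simp

definition gw :: "real \<Rightarrow> real \<Rightarrow> real" where
  "gw I y = normal_density 0 (sqrt 2 / I) y"

lemma rho_gw: "rho k s y = gw (Ifun k s) y"
proof -
  have I: "Ifun k s > 0" by (rule Ifun_pos)
  define I where "I = Ifun k s"
  have I0: "I > 0" using I I_def by simp
  have a: "2 * pi * (sqrt 2 / I)\<^sup>2 = 4 * pi / I\<^sup>2" using I0 by (simp add: power_divide)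
  have b: "sqrt (4 * pi / I\<^sup>2) = sqrt (4*pi) / I" using I0 by (simp add: real_sqrt_divide)
  have c: "- (y - 0)\<^sup>2 / (2 * (sqrt 2 / I)\<^sup>2) = - I\<^sup>2 * y\<^sup>2 / 4" using I0 by (simp add: power_divide field_simps)
  show ?thesis unfolding rho_def gw_def normal_density_def I_def[symmetric]
    using a b c by (simp add: field_simps)
qed

definition mu :: "real \<Rightarrow> nat \<Rightarrow> real" where
  "mu I j = (LINT y|lborel. gw I y * y ^ j)"

lemma gw_nonneg: "gw I y \<ge> 0" unfolding gw_def by simp

lemma integrable_mom: "I > 0 \<Longrightarrow> integrable lborel (\<lambda>y. gw I y * y ^ j)"
  unfolding gw_def using integrable_normal_moment[of "sqrt 2 / I" 0 j] by simp

lemma mu_even: assumes "I > 0" shows "mu I (2*i) = fact (2*i) / (I ^ (2*i) * fact i)"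
proof -
  have "mu I (2*i) = fact (2 * i) / ((2 / (sqrt 2 / I)\<^sup>2)^i * fact i)"
    unfolding mu_def gw_def using integral_normal_moment_even[where \<sigma>="sqrt 2 / I" and k=i and \<mu>=0] assms by simp
  also have "(2 / (sqrt 2 / I)\<^sup>2)^i = I^(2*i)" using assms by (simp add: power_divide power_mult)
  finally show ?thesis .
qed

lemma mu_odd: assumes "I > 0" shows "mu I (2*i+1) = 0"
  unfolding mu_def gw_def using integral_normal_moment_odd[where \<sigma>="sqrt 2 / I" and k=i and \<mu>=0] assms by simp

lemma mu_rec: assumes "I > 0" shows "mu I (Suc j) = (2 / I\<^sup>2) * real j * mu I (j - 1)"
proof (cases "even j")
  case True
  then obtain i where j: "j = 2*i" by (auto elim: evenE)
  then show ?thesis using mu_odd[OF assms, of i] mu_odd[OF assms, of "i-1"]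
    by (cases i) auto
next
  case False
  then obtain i where j: "j = 2*i+1" by (auto elim: oddE)
  have e1: "mu I (Suc j) = fact (2*(i+1)) / (I ^ (2*(i+1)) * fact (i+1))"
    using mu_even[OF assms, of "i+1"] j by simp
  have e2: "mu I (j - 1) = fact (2*i) / (I ^ (2*i) * fact i)"
    using mu_even[OF assms, of i] j by simp
  have f1: "fact (2*(i+1)) = (2*real i+2)*(2*real i+1)* (fact (2*i) :: real)"
    by (simp add: algebra_simps)
  have f2: "fact (i+1) = (real i+1) * (fact i :: real)" by simp
  have pI: "I ^ (2*(i+1)) = I\<^sup>2 * I^(2*i)" by (simp add: power_add power2_eq_square)
  have nz: "I\<^sup>2 * I^(2*i) * (real i + 1) * fact i \<noteq> 0" using assms by simp
  have "(2*real i+2)*(2*real i+1)* (fact (2*i) :: real) / (I\<^sup>2 * I^(2*i) * ((real i+1) * fact i))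
     = (2 / I\<^sup>2) * (2*real i + 1) * (fact (2*i) / (I ^ (2*i) * fact i))"
  proof -
    have "(2*real i+2) = 2 * (real i + 1)" by simp
    moreover have "real i + 1 \<noteq> 0" by simp
    moreover have "I \<noteq> 0" using assms by simp
    ultimately show ?thesis by (simp add: divide_simps) (simp add: algebra_simps)
  qed
  then show ?thesis unfolding e1 e2 f1 f2 pI using assms j
    by (simp add: mult.assoc)
qed

lemma mu_0: "I > 0 \<Longrightarrow> mu I 0 = 1" using mu_even[of I 0] by simp


definition hc :: "nat \<Rightarrow> nat \<Rightarrow> real" where
  "hc n l = fact n / (fact l * fact (n - 2*l))"

definition hh :: "real \<Rightarrow> nat \<Rightarrow> real \<Rightarrow> real" where
  "hh a n y = (\<Sum>l = 0..n div 2. hc n l * a^l * y^(n-2*l))"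

lemma Hm_hh: "Hm k m y s = hh (- (1 / (Ifun k s)\<^sup>2)) m y"
  unfolding Hm_def hh_def hc_def by simp

definition hz :: "nat \<Rightarrow> nat \<Rightarrow> real" where
  "hz n l = (if 2*l \<le> n then hc n l else 0)"

lemma hh_ext: assumes "n div 2 \<le> N"
  shows "hh a n y = (\<Sum>l = 0..N. hz n l * a^l * y^(n-2*l))"
proof -
  have "(\<Sum>l = 0..N. hz n l * a^l * y^(n-2*l)) = (\<Sum>l = 0..n div 2. hz n l * a^l * y^(n-2*l))"
    by (rule sum.mono_neutral_right) (use assms in \<open>auto simp: hz_def\<close>)
  also have "\<dots> = hh a n y" unfolding hh_def
    by (rule sum.cong) (auto simp: hz_def)
  finally show ?thesis by simp
qed

lemma hc_0[simp]: "hc n 0 = 1" unfolding hc_def by simp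

lemma hc_rec: "hc (2*j+d+2) (Suc j) = (if d \<ge> 1 then hc (2*j+d+1) (Suc j) else 0) + 2*(2*j+d+1)*hc (2*j+d) j"
proof (cases d)
  case 0
  have X: "hc (2*j+2) (Suc j) = fact (2*j+2) / fact (Suc j)" unfolding hc_def by simp
  have Y: "hc (2*j) j = fact (2*j) / fact j" unfolding hc_def by simp
  have f1: "fact (2*j+2) = (2*real j+2)*(2*real j+1)*(fact (2*j)::real)" by (simp add: algebra_simps)
  have f2: "fact (Suc j) = (real j+1) * (fact j :: real)" by simp
  have "hc (2*j+2) (Suc j) = ((2*real j+2)/(real j+1)) * (2*real j+1) * (fact (2*j) / fact j)"
    unfolding X f1 f2 by (simp add: field_simps)
  also have "(2*real j+2)/(real j+1) = 2" by (simp add: field_simps)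
  finally show ?thesis using 0 Y by (simp add: algebra_simps)
next
  case (Suc e)
  have A: "hc (2*j+d+2) (Suc j) = fact (2*j+e+3) / (fact (Suc j) * fact (Suc e))" unfolding hc_def Suc
    by (simp add: numeral_3_eq_3)
  have B: "hc (2*j+d+1) (Suc j) = fact (2*j+e+2) / (fact (Suc j) * fact e)" unfolding hc_def Suc
    by simp
  have C: "hc (2*j+d) j = fact (2*j+e+1) / (fact j * fact (Suc e))" unfolding hc_def Suc by simp
  have f1: "fact (2*j+e+3) = (2*real j + e + 3) * (fact (2*j+e+2)::real)"
    by (simp add: numeral_3_eq_3 algebra_simps)
  have f2: "fact (2*j+e+2) = (2*real j + e + 2) * (fact (2*j+e+1)::real)"
    by (simp add: algebra_simps)
  have f3: "fact (Suc j) = (real j+1) * (fact j :: real)" by simp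
  have f4: "fact (Suc e) = (real e+1) * (fact e :: real)" by simp
  have nz: "fact j \<noteq> (0::real)" "fact e \<noteq> (0::real)" "fact (2*j+e+1) \<noteq> (0::real)" by auto
  have nz2: "real j + 1 \<noteq> 0" "real e + 1 \<noteq> 0" by simp_all
  show ?thesis unfolding A B C f1 f2 f3 f4 using Suc nz nz2
    by (simp add: divide_simps) (simp add: algebra_simps)
qed

lemma hh_rec: "hh a (n+2) y = y * hh a (n+1) y + 2*a*real (n+1) * hh a n y"
proof -
  define G where "G l = (if l = 0 then 0 else 2*real (n+1) * hz n (l-1) * a^l * y^(n+2-2*l))" for l
  have L: "hh a (n+2) y = (\<Sum>l = 0..n+2. hz (n+2) l * a^l * y^(n+2-2*l))"
    by (rule hh_ext) simp
  have R1: "y * hh a (n+1) y = (\<Sum>l = 0..n+2. hz (n+1) l * a^l * (y * y^(n+1-2*l)))"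
  proof -
    have e: "hh a (n+1) y = (\<Sum>l = 0..n+2. hz (n+1) l * a^l * y^(n+1-2*l))"
      by (rule hh_ext) simp
    show ?thesis unfolding e sum_distrib_left by (rule sum.cong) (simp_all add: mult_ac)
  qed
  have R2: "2*a*real (n+1) * hh a n y = (\<Sum>l = 0..n+2. G l)"
  proof -
    have "(\<Sum>l = 0..n+2. G l) = G 0 + (\<Sum>l = 0..n+1. G (Suc l))"
      using sum.atLeast0_atMost_Suc_shift[of G "n+1"] by simp
    also have "\<dots> = (\<Sum>l = 0..n+1. 2*a*real (n+1) * (hz n l * a^l * y^(n-2*l)))"
      unfolding G_def by (simp add: ac_simps)
    also have "\<dots> = 2*a*real (n+1) * hh a n y"
    proof -
      have e: "hh a n y = (\<Sum>l = 0..n+1. hz n l * a^l * y^(n-2*l))"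
        by (rule hh_ext) simp
      show ?thesis unfolding e sum_distrib_left by simp
    qed
    finally show ?thesis by simp
  qed
  have pt: "hz (n+2) l * a^l * y^(n+2-2*l) = hz (n+1) l * a^l * (y * y^(n+1-2*l)) + G l" for l
  proof (cases l)
    case 0
    then show ?thesis by (simp add: hz_def G_def)
  next
    case (Suc j)
    show ?thesis
    proof (cases "2*l \<le> n+2")
      case False
      then show ?thesis using Suc by (simp add: hz_def G_def)
    next
      case True
      then obtain d where n: "n = 2*j + d" using Suc by (intro that[of "n - 2*j"]) simp
      have hr: "hc (n+2) l = (if d \<ge> 1 then hc (n+1) l else 0) + 2*real (n+1)*hc n j"
        using hc_rec[of j d] unfolding n Suc by (simp add: algebra_simps)
      show ?thesis
      proof (cases "d \<ge> 1")
        case True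
        have "n+2-2*l = Suc (n+1-2*l)" using True n Suc by simp
        then have "y * y^(n+1-2*l) = y^(n+2-2*l)" by simp
        then show ?thesis using hr True n Suc by (simp add: hz_def G_def algebra_simps)
      next
        case False
        then have d0: "d = 0" by simp
        show ?thesis using hr d0 n Suc by (simp add: hz_def G_def algebra_simps)
      qed
    qed
  qed
  show ?thesis unfolding L R1 R2 sum.distrib[symmetric] using pt by (intro sum.cong) auto
qed

lemma hc_deriv: assumes "2*l < n" shows "hc n l * real (n - 2*l) = real n * hc (n-1) l"
proof -
  obtain d where n: "n = 2*l + Suc d" using assms by (intro that[of "n - 2*l - 1"]) simp
  have a: "hc n l = fact (2*l+Suc d) / (fact l * fact (Suc d))" unfolding hc_def n by simp
  have b: "hc (n-1) l = fact (2*l+d) / (fact l * fact d)" unfolding hc_def n by simp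
  have f1: "fact (2*l+Suc d) = (2*real l + real d + 1) * (fact (2*l+d)::real)" by (simp add: algebra_simps)
  have f2: "fact (Suc d) = (real d + 1) * (fact d::real)" by simp
  have nz: "fact l \<noteq> (0::real)" "fact d \<noteq> (0::real)" "real d + 1 \<noteq> 0" by simp_all
  show ?thesis unfolding a b f1 f2 using n nz by (simp add: divide_simps) (simp add: algebra_simps)
qed


definition S :: "real \<Rightarrow> real \<Rightarrow> nat \<Rightarrow> nat \<Rightarrow> real" where
  "S a I n e = (\<Sum>l = 0..n div 2. hc n l * a^l * mu I (n-2*l+e))"

lemma hh_expand: "gw I y * (y^e * hh a n y) = (\<Sum>l = 0..n div 2. hc n l * a^l * (gw I y * y^(n-2*l+e)))"
  unfolding hh_def sum_distrib_left sum_distrib_right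
proof (rule sum.cong)
  fix l assume "l \<in> {0..n div 2}"
  have "y^(n-2*l+e) = y^(n-2*l) * y^e" by (rule power_add)
  then show "gw I y * (y ^ e * (hc n l * a ^ l * y ^ (n - 2 * l))) = hc n l * a ^ l * (gw I y * y ^ (n - 2 * l + e))"
    by (simp only: mult_ac)
qed simp

lemma integrable_hh: assumes "I > 0" shows "integrable lborel (\<lambda>y. gw I y * (y^e * hh a n y))"
  unfolding hh_expand
  by (rule Bochner_Integration.integrable_sum) (intro integrable_mult_right integrable_mom assms)

lemma integral_hh: assumes "I > 0" shows "(LINT y|lborel. gw I y * (y^e * hh a n y)) = S a I n e"
  unfolding hh_expand S_def
  by (rule trans[OF Bochner_Integration.integral_sum]) (auto intro!: integrable_mult_right integrable_mom assms simp: mu_def)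

lemma S_ibp: assumes "I > 0"
  shows "S a I n (Suc e) = (2 / I\<^sup>2) * (real n * S a I (n-1) e + real e * S a I n (e-1))"
proof -
  define v where "v = 2 / I\<^sup>2"
  have "S a I n (Suc e) = (\<Sum>l = 0..n div 2. hc n l * a^l * (v * real (n-2*l+e) * mu I (n-2*l+e-1)))"
    unfolding S_def v_def using mu_rec[OF assms] by (intro sum.cong) simp_all
  also have "\<dots> = v * (\<Sum>l = 0..n div 2. hc n l * real (n-2*l) * a^l * mu I (n-2*l+e-1))
                 + v * real e * (\<Sum>l = 0..n div 2. hc n l * a^l * mu I (n-2*l+e-1))"
    unfolding sum_distrib_left sum.distrib[symmetric]
    by (intro sum.cong) (auto simp: algebra_simps)
  also have "(\<Sum>l = 0..n div 2. hc n l * a^l * mu I (n-2*l+e-1)) = (if e = 0 then (\<Sum>l = 0..n div 2. hc n l * a^l * mu I (n-2*l+e-1)) else S a I n (e-1))"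
    unfolding S_def by (cases e) (auto intro!: sum.cong)
  also have "(\<Sum>l = 0..n div 2. hc n l * real (n-2*l) * a^l * mu I (n-2*l+e-1)) = real n * S a I (n-1) e"
  proof (cases n)
    case 0
    then show ?thesis by simp
  next
    case (Suc m)
    have "(\<Sum>l = 0..n div 2. hc n l * real (n-2*l) * a^l * mu I (n-2*l+e-1))
        = (\<Sum>l = 0..m div 2. hc n l * real (n-2*l) * a^l * mu I (n-2*l+e-1))"
    proof (rule sum.mono_neutral_right)
      show "{0..m div 2} \<subseteq> {0..n div 2}" using Suc by auto
      show "\<forall>i\<in>{0..n div 2} - {0..m div 2}. hc n i * real (n - 2 * i) * a ^ i * mu I (n - 2 * i + e - 1) = 0"
      proof
        fix i assume "i \<in> {0..n div 2} - {0..m div 2}"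
        then have "n - 2*i = 0" using Suc by auto
        then show "hc n i * real (n - 2 * i) * a ^ i * mu I (n - 2 * i + e - 1) = 0" by simp
      qed
    qed simp
    also have "\<dots> = (\<Sum>l = 0..m div 2. real n * (hc m l * a^l * mu I (m-2*l+e)))"
    proof (rule sum.cong)
      fix l assume "l \<in> {0..m div 2}"
      then have l: "2*l < n" using Suc by auto
      have "hc n l * real (n-2*l) = real n * hc m l" using hc_deriv[OF l] Suc by simp
      moreover have "n-2*l+e-1 = m-2*l+e" using l Suc by simp
      ultimately show "hc n l * real (n-2*l) * a^l * mu I (n-2*l+e-1) = real n * (hc m l * a^l * mu I (m-2*l+e))"
        by (simp add: mult_ac)
    qed simp
    also have "\<dots> = real n * S a I (n-1) e" unfolding S_def Suc sum_distrib_left by simp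
    finally show ?thesis .
  qed
  finally show ?thesis unfolding v_def using assms by (cases e) (simp_all add: field_simps)
qed

lemma S_rec2: assumes "I > 0"
  shows "S a I (n+2) e = S a I (n+1) (Suc e) + 2*a*real (n+1) * S a I n e"
proof -
  have "S a I (n+2) e = (LINT y|lborel. gw I y * (y^e * hh a (n+2) y))" using integral_hh[OF assms] by simp
  also have "\<dots> = (LINT y|lborel. gw I y * (y^(Suc e) * hh a (n+1) y) + 2*a*real (n+1) * (gw I y * (y^e * hh a n y)))"
    unfolding hh_rec by (rule Bochner_Integration.integral_cong) (simp_all add: algebra_simps)
  also have "\<dots> = S a I (n+1) (Suc e) + 2*a*real (n+1) * S a I n e"
    apply (subst Bochner_Integration.integral_add)
    using integrable_hh[OF assms] integral_hh[OF assms] integrable_hh[OF assms, of "Suc e" a "n+1"] integral_hh[OF assms, of "Suc e" a "n+1"] by auto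
  finally show ?thesis .
qed

lemma S_zero[simp]: "S a I 0 e = mu I e" unfolding S_def by simp

lemma S_down: assumes "I > 0"
  shows "S (- (1 / I\<^sup>2)) I (Suc n) e = (2 / I\<^sup>2) * real e * S (- (1 / I\<^sup>2)) I n (e-1)"
proof (cases n)
  case 0
  have "S (- (1 / I\<^sup>2)) I 1 e = mu I (Suc e)" unfolding S_def by simp
  then show ?thesis using 0 mu_rec[OF assms, of e] by simp
next
  case (Suc m)
  let ?a = "- (1 / I\<^sup>2)"
  have "S ?a I (Suc n) e = S ?a I (m+1) (Suc e) + 2 * ?a * real (m+1) * S ?a I m e"
    using S_rec2[OF assms, of ?a m e] Suc by simp
  also have "S ?a I (m+1) (Suc e) = (2 / I\<^sup>2) * (real (m+1) * S ?a I m e + real e * S ?a I (m+1) (e-1))"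
    using S_ibp[OF assms, of ?a "m+1" e] by simp
  finally have X: "S ?a I (Suc n) e = (2 / I\<^sup>2) * (real (m+1) * S ?a I m e + real e * S ?a I (m+1) (e-1)) + 2 * ?a * real (m+1) * S ?a I m e" .
  show ?thesis unfolding X using Suc assms by (simp add: field_simps)
qed

lemma S_orth: assumes "I > 0" shows "e < n \<Longrightarrow> S (- (1 / I\<^sup>2)) I n e = 0"
proof (induction n arbitrary: e)
  case 0 then show ?case by simp
next
  case (Suc n)
  show ?case
  proof (cases e)
    case 0 then show ?thesis using S_down[OF assms, of n e] by simp
  next
    case (Suc e')
    then have "e - 1 < n" using Suc.prems by simp
    then show ?thesis using S_down[OF assms, of n e] Suc.IH by simp
  qed
qed

lemma S_diag: assumes "I > 0" shows "S (- (1 / I\<^sup>2)) I n n = (2 / I\<^sup>2)^n * fact n"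
proof (induction n)
  case 0 then show ?case using mu_0[OF assms] by simp
next
  case (Suc n)
  then show ?case using S_down[OF assms, of n "Suc n"] by (simp add: algebra_simps)
qed


abbreviation aI :: "real \<Rightarrow> real" where "aI I \<equiv> - (1 / I\<^sup>2)"

lemma inner_mono_H: "inner_rho k s (\<lambda>y. y^e) (\<lambda>y. Hm k n y s) = S (aI (Ifun k s)) (Ifun k s) n e"
proof -
  have "inner_rho k s (\<lambda>y. y^e) (\<lambda>y. Hm k n y s) = (LINT y|lborel. gw (Ifun k s) y * (y^e * hh (aI (Ifun k s)) n y))"
    unfolding inner_rho_def rho_gw Hm_hh by (simp add: mult_ac)
  also have "\<dots> = S (aI (Ifun k s)) (Ifun k s) n e" by (rule integral_hh[OF Ifun_pos])
  finally show ?thesis .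
qed

lemma inner_HH: "inner_rho k s (\<lambda>y. Hm k n y s) (\<lambda>y. Hm k n y s) = (2 / (Ifun k s)\<^sup>2)^n * fact n"
proof -
  define I where "I = Ifun k s"
  have I0: "I > 0" unfolding I_def by (rule Ifun_pos)
  have "inner_rho k s (\<lambda>y. Hm k n y s) (\<lambda>y. Hm k n y s)
     = (LINT y|lborel. (\<Sum>l = 0..n div 2. hc n l * aI I^l * (gw I y * (y^(n-2*l) * hh (aI I) n y))))"
    unfolding inner_rho_def rho_gw Hm_hh I_def[symmetric]
    by (rule Bochner_Integration.integral_cong) (simp_all add: hh_def[of _ n] sum_distrib_right sum_distrib_left mult_ac)
  also have "\<dots> = (\<Sum>l = 0..n div 2. hc n l * aI I^l * S (aI I) I n (n-2*l))"
    by (rule trans[OF Bochner_Integration.integral_sum])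
       (auto intro!: integrable_mult_right integrable_hh I0 simp: integral_hh[OF I0])
  also have "\<dots> = (\<Sum>l \<in> {0}. hc n l * aI I^l * S (aI I) I n (n-2*l))"
  proof (rule sum.mono_neutral_right)
    show "\<forall>i\<in>{0..n div 2} - {0}. hc n i * aI I ^ i * S (aI I) I n (n - 2 * i) = 0"
    proof
      fix i assume "i \<in> {0..n div 2} - {0}"
      then have "n - 2*i < n" by auto
      then show "hc n i * aI I ^ i * S (aI I) I n (n - 2 * i) = 0" using S_orth[OF I0] by simp
    qed
  qed auto
  also have "\<dots> = (2 / I\<^sup>2)^n * fact n" using S_diag[OF I0] by simp
  finally show ?thesis unfolding I_def .
qed

lemma Pm_mono: "Pm k s n (\<lambda>y. y^e) = S (aI (Ifun k s)) (Ifun k s) n e / ((2 / (Ifun k s)\<^sup>2)^n * fact n)"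
  unfolding Pm_def inner_mono_H inner_HH ..

lemma Pm_mono_lt: "e < n \<Longrightarrow> Pm k s n (\<lambda>y. y^e) = 0"
  unfolding Pm_mono using S_orth[OF Ifun_pos] by simp

lemma Pm_mono_eq: "Pm k s n (\<lambda>y. y^n) = 1"
  unfolding Pm_mono using S_diag[OF Ifun_pos, of k s n] Ifun_pos[of k s] by simp

definition EE :: "nat \<Rightarrow> real" where
  "EE L = (\<Sum>i\<le>L. real (L choose i) * (fact (2*i) / fact i))"

lemma dom_expand: "(1 + (I*y)\<^sup>2)^L * gw I y = (\<Sum>i\<le>L. real (L choose i) * I^(2*i) * (gw I y * y^(2*i)))"
proof -
  have "(1 + (I*y)\<^sup>2)^L = ((I*y)\<^sup>2 + 1)^L" by (simp add: add.commute)
  also have "\<dots> = (\<Sum>i\<le>L. real (L choose i) * ((I*y)\<^sup>2)^i * 1^(L-i))" by (rule binomial_ring)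
  finally show ?thesis by (simp add: sum_distrib_right sum_distrib_left power_mult_distrib power_mult[symmetric] mult_ac)
qed

lemma dom_integrable: "I > 0 \<Longrightarrow> integrable lborel (\<lambda>y. (1 + (I*y)\<^sup>2)^L * gw I y)"
  unfolding dom_expand
  by (rule Bochner_Integration.integrable_sum) (intro integrable_mult_right integrable_mom)

lemma dom_integral: assumes "I > 0" shows "(LINT y|lborel. (1 + (I*y)\<^sup>2)^L * gw I y) = EE L"
  unfolding dom_expand EE_def
  apply (rule trans[OF Bochner_Integration.integral_sum])
   apply (intro integrable_mult_right integrable_mom assms)
  apply (rule sum.cong, simp)
  using mu_even[OF assms] assms by (simp add: mu_def[symmetric])

lemma EE_nonneg: "EE L \<ge> 0" unfolding EE_def by (intro sum_nonneg) simp

definition KK :: "nat \<Rightarrow> real" where "KK n = (\<Sum>l = 0..n div 2. hc n l)"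

lemma hc_nonneg: "hc n l \<ge> 0" unfolding hc_def by simp

lemma KK_nonneg: "KK n \<ge> 0" unfolding KK_def by (intro sum_nonneg hc_nonneg)

lemma abs_pow_le: "\<bar>u::real\<bar>^j \<le> (1 + u\<^sup>2)^n" if "j \<le> n"
proof -
  have u: "\<bar>u\<bar> \<le> 1 + u\<^sup>2"
  proof -
    have h: "0 \<le> (\<bar>u\<bar> - 1/2)\<^sup>2" by simp
    have "(\<bar>u\<bar> - 1/2)\<^sup>2 = u\<^sup>2 - \<bar>u\<bar> + 1/4" by (simp add: power2_diff algebra_simps power2_eq_square)
    then show ?thesis using h by linarith
  qed
  have "\<bar>u\<bar>^j \<le> (1 + u\<^sup>2)^j" by (rule power_mono[OF u]) simp
  also have "\<dots> \<le> (1 + u\<^sup>2)^n" by (rule power_increasing[OF that]) simp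
  finally show ?thesis .
qed

lemma hh_bound: assumes "I > 0"
  shows "\<bar>hh (aI I) n y\<bar> \<le> KK n * (1 + (I*y)\<^sup>2)^n / I^n"
proof -
  have "\<bar>hh (aI I) n y\<bar> \<le> (\<Sum>l = 0..n div 2. \<bar>hc n l * aI I^l * y^(n-2*l)\<bar>)"
    unfolding hh_def by (rule sum_abs)
  also have "\<dots> \<le> (\<Sum>l = 0..n div 2. hc n l * ((1 + (I*y)\<^sup>2)^n / I^n))"
  proof (rule sum_mono)
    fix l assume l: "l \<in> {0..n div 2}"
    then have l2: "2*l \<le> n" by auto
    have e1: "\<bar>aI I^l * y^(n-2*l)\<bar> = \<bar>y\<bar>^(n-2*l) / I^(2*l)"
      using assms by (simp add: abs_mult power_abs power_mult power_divide)
    have e2: "\<bar>I*y\<bar>^(n-2*l) / I^n = \<bar>y\<bar>^(n-2*l) / I^(2*l)"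
    proof -
      have "I^n = I^(2*l) * I^(n-2*l)" using l2 by (simp add: power_add[symmetric])
      moreover have "\<bar>I*y\<bar>^(n-2*l) = I^(n-2*l) * \<bar>y\<bar>^(n-2*l)" using assms by (simp add: abs_mult power_mult_distrib)
      moreover have "I^(n-2*l) > 0" using assms by simp
      ultimately show ?thesis using assms by simp
    qed
    have le: "\<bar>I*y\<bar>^(n-2*l) / I^n \<le> (1 + (I*y)\<^sup>2)^n / I^n"
      using assms by (intro divide_right_mono abs_pow_le) simp_all
    have "\<bar>hc n l * aI I^l * y^(n-2*l)\<bar> = hc n l * \<bar>aI I^l * y^(n-2*l)\<bar>"
      by (simp only: mult.assoc abs_mult[of "hc n l"] abs_of_nonneg[OF hc_nonneg])
    also have "\<dots> \<le> hc n l * ((1 + (I*y)\<^sup>2)^n / I^n)"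
      using le e1 e2 by (intro mult_left_mono hc_nonneg) simp_all
    finally show "\<bar>hc n l * aI I^l * y^(n-2*l)\<bar> \<le> hc n l * ((1 + (I*y)\<^sup>2)^n / I^n)" .
  qed
  also have "\<dots> = KK n * (1 + (I*y)\<^sup>2)^n / I^n" unfolding KK_def sum_distrib_right by (simp add: sum_divide_distrib)
  finally show ?thesis .
qed


definition CC :: "nat \<Rightarrow> nat \<Rightarrow> real" where
  "CC n N = KK n * EE (N+n) / (2^n * fact n)"

lemma CC_nonneg: "CC n N \<ge> 0" unfolding CC_def using KK_nonneg EE_nonneg by simp

lemma Pm_bound:
  assumes f: "\<And>y. \<bar>f y\<bar> \<le> B * (1 + (Ifun k s * y)\<^sup>2)^N"
  shows "\<bar>Pm k s n f\<bar> \<le> CC n N * B * Ifun k s ^ n"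
proof -
  define I where "I = Ifun k s"
  have I0: "I > 0" unfolding I_def by (rule Ifun_pos)
  have "\<bar>f 0\<bar> \<le> B" using f[of 0] by simp
  then have B0: "B \<ge> 0" using abs_ge_zero[of "f 0"] by linarith
  define h where "h y = (B * KK n / I^n) * ((1 + (I*y)\<^sup>2)^(N+n) * gw I y)" for y
  have hint: "integrable lborel h" unfolding h_def by (intro integrable_mult_right dom_integrable I0)
  have hval: "(LINT y|lborel. h y) = B * KK n / I^n * EE (N+n)"
    unfolding h_def using dom_integral[OF I0] by simp
  have pt: "\<bar>f y * Hm k n y s * rho k s y\<bar> \<le> h y" for y
  proof -
    have "\<bar>f y * Hm k n y s * rho k s y\<bar> = \<bar>f y\<bar> * \<bar>hh (aI I) n y\<bar> * gw I y"
      unfolding Hm_hh rho_gw I_def[symmetric] using gw_nonneg[of I y] by (simp add: abs_mult)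
    also have "\<dots> \<le> (B * (1 + (I * y)\<^sup>2)^N) * (KK n * (1 + (I*y)\<^sup>2)^n / I^n) * gw I y"
      using f[of y] hh_bound[OF I0, of n y] gw_nonneg[of I y] B0 I_def
      by (intro mult_right_mono mult_mono) (simp_all)
    also have "\<dots> = h y" unfolding h_def by (simp add: power_add field_simps)
    finally show ?thesis .
  qed
  have num: "\<bar>inner_rho k s f (\<lambda>y. Hm k n y s)\<bar> \<le> B * KK n / I^n * EE (N+n)"
  proof -
    have "\<bar>inner_rho k s f (\<lambda>y. Hm k n y s)\<bar> \<le> (LINT y|lborel. \<bar>f y * Hm k n y s * rho k s y\<bar>)"
      unfolding inner_rho_def by (rule integral_abs_bound)
    also have "\<dots> \<le> (LINT y|lborel. h y)"
    proof (rule integral_mono'[OF hint])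
      fix y show "\<bar>f y * Hm k n y s * rho k s y\<bar> \<le> h y" by (rule pt)
      show "0 \<le> h y" unfolding h_def using I0 B0 KK_nonneg[of n] gw_nonneg[of I y]
        by (intro mult_nonneg_nonneg divide_nonneg_pos) simp_all
    qed
    finally show ?thesis using hval by simp
  qed
  have D: "inner_rho k s (\<lambda>y. Hm k n y s) (\<lambda>y. Hm k n y s) = (2 / I\<^sup>2)^n * fact n"
    unfolding inner_HH I_def ..
  have Dpos: "(2 / I\<^sup>2)^n * fact n > 0" using I0 by simp
  have "\<bar>Pm k s n f\<bar> = \<bar>inner_rho k s f (\<lambda>y. Hm k n y s)\<bar> / ((2 / I\<^sup>2)^n * fact n)"
    unfolding Pm_def D using Dpos by simp
  also have "\<dots> \<le> (B * KK n / I^n * EE (N+n)) / ((2 / I\<^sup>2)^n * fact n)"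
    using num Dpos by (intro divide_right_mono) simp_all
  also have "\<dots> = CC n N * B * I ^ n"
  proof -
    have "(2 / I\<^sup>2)^n = 2^n / I^(2*n)" by (simp add: power_divide power_mult)
    moreover have "I^(2*n) = I^n * I^n" by (simp add: mult_2 power_add)
    ultimately show ?thesis unfolding CC_def using I0 by (simp add: field_simps)
  qed
  finally show ?thesis unfolding I_def .
qed


definition good :: "nat \<Rightarrow> real \<Rightarrow> (real \<Rightarrow> real) \<Rightarrow> bool" where
  "good k s f \<longleftrightarrow> f \<in> borel_measurable borel \<and> (\<exists>B N. \<forall>y. \<bar>f y\<bar> \<le> B * (1 + (Ifun k s * y)\<^sup>2)^N)"

lemma Hm_meas[measurable]: "(\<lambda>y. Hm k n y s) \<in> borel_measurable borel"
  unfolding Hm_def by measurable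

lemma rho_meas[measurable]: "rho k s \<in> borel_measurable borel"
  unfolding rho_def by measurable

lemma good_int:
  assumes "good k s f" shows "integrable lborel (\<lambda>y. f y * Hm k n y s * rho k s y)"
proof -
  define I where "I = Ifun k s"
  have I0: "I > 0" unfolding I_def by (rule Ifun_pos)
  obtain B N where f: "\<And>y. \<bar>f y\<bar> \<le> B * (1 + (I * y)\<^sup>2)^N" and m: "f \<in> borel_measurable borel"
    using assms unfolding good_def I_def by blast
  have "\<bar>f 0\<bar> \<le> B" using f[of 0] by simp
  then have B0: "B \<ge> 0" using abs_ge_zero[of "f 0"] by linarith
  define h where "h y = (B * KK n / I^n) * ((1 + (I*y)\<^sup>2)^(N+n) * gw I y)" for y
  have hint: "integrable lborel h" unfolding h_def by (intro integrable_mult_right dom_integrable I0)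
  have pt: "\<bar>f y * Hm k n y s * rho k s y\<bar> \<le> h y" for y
  proof -
    have "\<bar>f y * Hm k n y s * rho k s y\<bar> = \<bar>f y\<bar> * \<bar>hh (aI I) n y\<bar> * gw I y"
      unfolding Hm_hh rho_gw I_def[symmetric] using gw_nonneg[of I y] by (simp add: abs_mult)
    also have "\<dots> \<le> (B * (1 + (I * y)\<^sup>2)^N) * (KK n * (1 + (I*y)\<^sup>2)^n / I^n) * gw I y"
      using f[of y] hh_bound[OF I0, of n y] gw_nonneg[of I y] B0 I_def
      by (intro mult_right_mono mult_mono) (simp_all)
    also have "\<dots> = h y" unfolding h_def by (simp add: power_add field_simps)
    finally show ?thesis .
  qed
  show ?thesis
  proof (rule Bochner_Integration.integrable_bound[OF hint])
    show "(\<lambda>y. f y * Hm k n y s * rho k s y) \<in> borel_measurable lborel" using m by measurable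
    show "AE x in lborel. norm (f x * Hm k n x s * rho k s x) \<le> norm (h x)"
    proof (rule AE_I2)
      fix x show "norm (f x * Hm k n x s * rho k s x) \<le> norm (h x)" using pt[of x] by simp
    qed
  qed
qed

lemma Pm_add: assumes "good k s f" "good k s g"
  shows "Pm k s n (\<lambda>y. f y + g y) = Pm k s n f + Pm k s n g"
proof -
  have "inner_rho k s (\<lambda>y. f y + g y) (\<lambda>y. Hm k n y s) = inner_rho k s f (\<lambda>y. Hm k n y s) + inner_rho k s g (\<lambda>y. Hm k n y s)"
  proof -
    have e: "(\<lambda>y. (f y + g y) * Hm k n y s * rho k s y) = (\<lambda>y. f y * Hm k n y s * rho k s y + g y * Hm k n y s * rho k s y)"
      by (auto simp: fun_eq_iff algebra_simps)
    show ?thesis unfolding inner_rho_def e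
      by (rule Bochner_Integration.integral_add) (auto intro!: good_int assms)
  qed
  then show ?thesis unfolding Pm_def by (simp add: add_divide_distrib)
qed

lemma Pm_cmult: "Pm k s n (\<lambda>y. c * f y) = c * Pm k s n f"
proof -
  have "inner_rho k s (\<lambda>y. c * f y) (\<lambda>y. Hm k n y s) = c * inner_rho k s f (\<lambda>y. Hm k n y s)"
    unfolding inner_rho_def by (simp add: mult.assoc)
  then show ?thesis unfolding Pm_def by simp
qed

lemma Pm_sum: assumes "finite A" "\<And>i. i \<in> A \<Longrightarrow> good k s (f i)"
  shows "Pm k s n (\<lambda>y. \<Sum>i\<in>A. f i y) = (\<Sum>i\<in>A. Pm k s n (f i))"
proof -
  have "inner_rho k s (\<lambda>y. \<Sum>i\<in>A. f i y) (\<lambda>y. Hm k n y s) = (\<Sum>i\<in>A. inner_rho k s (f i) (\<lambda>y. Hm k n y s))"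
    unfolding inner_rho_def sum_distrib_right
    by (rule Bochner_Integration.integral_sum) (auto intro!: good_int assms)
  then show ?thesis unfolding Pm_def by (simp add: sum_divide_distrib)
qed

lemma Pm_cong: "(\<And>y. f y = g y) \<Longrightarrow> Pm k s n f = Pm k s n g"
  by (metis ext)

lemma pow_mono_base: "(1 + u\<^sup>2)^N \<le> (1 + (u::real)\<^sup>2)^N'" if "N \<le> N'"
  by (rule power_increasing[OF that]) simp

lemma good_add: assumes "good k s f" "good k s g" shows "good k s (\<lambda>y. f y + g y)"
proof -
  obtain B1 N1 where 1: "\<And>y. \<bar>f y\<bar> \<le> B1 * (1 + (Ifun k s * y)\<^sup>2)^N1" using assms unfolding good_def by blast
  obtain B2 N2 where 2: "\<And>y. \<bar>g y\<bar> \<le> B2 * (1 + (Ifun k s * y)\<^sup>2)^N2" using assms unfolding good_def by blast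
  have B1: "B1 \<ge> 0" using 1[of 0] abs_ge_zero[of "f 0"] by simp
  have B2: "B2 \<ge> 0" using 2[of 0] abs_ge_zero[of "g 0"] by simp
  have "\<bar>f y + g y\<bar> \<le> (B1 + B2) * (1 + (Ifun k s * y)\<^sup>2)^(N1+N2)" for y
  proof -
    have "\<bar>f y\<bar> \<le> B1 * (1 + (Ifun k s * y)\<^sup>2)^(N1+N2)"
      using 1[of y] B1 pow_mono_base[of N1 "N1+N2"] by (meson le_add1 mult_left_mono order_trans)
    moreover have "\<bar>g y\<bar> \<le> B2 * (1 + (Ifun k s * y)\<^sup>2)^(N1+N2)"
      using 2[of y] B2 pow_mono_base[of N2 "N1+N2"] by (meson le_add2 mult_left_mono order_trans)
    ultimately have "\<bar>f y\<bar> + \<bar>g y\<bar> \<le> (B1 + B2) * (1 + (Ifun k s * y)\<^sup>2)^(N1+N2)"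
      by (simp add: distrib_right)
    then show ?thesis using abs_triangle_ineq[of "f y" "g y"] by linarith
  qed
  then show ?thesis using assms unfolding good_def by auto
qed

lemma good_mult: assumes "good k s f" "good k s g" shows "good k s (\<lambda>y. f y * g y)"
proof -
  obtain B1 N1 where 1: "\<And>y. \<bar>f y\<bar> \<le> B1 * (1 + (Ifun k s * y)\<^sup>2)^N1" using assms unfolding good_def by blast
  obtain B2 N2 where 2: "\<And>y. \<bar>g y\<bar> \<le> B2 * (1 + (Ifun k s * y)\<^sup>2)^N2" using assms unfolding good_def by blast
  have "\<bar>f y * g y\<bar> \<le> (B1 * B2) * (1 + (Ifun k s * y)\<^sup>2)^(N1+N2)" for y
  proof -
    have "\<bar>f y * g y\<bar> \<le> (B1 * (1 + (Ifun k s * y)\<^sup>2)^N1) * (B2 * (1 + (Ifun k s * y)\<^sup>2)^N2)"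
      unfolding abs_mult by (intro mult_mono 1 2) (use 1[of y] in auto)
    then show ?thesis by (simp add: power_add mult_ac)
  qed
  then show ?thesis using assms unfolding good_def by auto
qed

lemma good_const: "good k s (\<lambda>y. c)"
  unfolding good_def by (rule conjI, simp, rule exI[where x="\<bar>c\<bar>"], rule exI[where x="0::nat"], simp)

lemma good_cmult: "good k s f \<Longrightarrow> good k s (\<lambda>y. c * f y)"
  using good_mult[OF good_const] by blast

lemma good_sum: "finite A \<Longrightarrow> (\<And>i. i \<in> A \<Longrightarrow> good k s (f i)) \<Longrightarrow> good k s (\<lambda>y. \<Sum>i\<in>A. f i y)"
  by (induction A rule: finite_induct) (auto intro!: good_add good_const)

lemma mono_bound: assumes "(I::real) > 0" shows "\<bar>y^e\<bar> \<le> (1 / I^e) * (1 + (I*y)\<^sup>2)^e"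
proof -
  have a: "\<bar>I*y\<bar>^e = I^e * \<bar>y\<bar>^e" using assms by (simp add: abs_mult power_mult_distrib)
  have "\<bar>y^e\<bar> = \<bar>y\<bar>^e" by (rule power_abs)
  also have "\<dots> = \<bar>I*y\<bar>^e / I^e" unfolding a using assms by simp
  also have "\<dots> \<le> (1 + (I*y)\<^sup>2)^e / I^e" using assms by (intro divide_right_mono abs_pow_le) simp_all
  finally show ?thesis by simp
qed

lemma good_mono: "good k s (\<lambda>y. y^e)"
  unfolding good_def
  apply (intro conjI, measurable)
  apply (rule exI[where x="1 / Ifun k s ^ e"], rule exI[where x=e])
  using mono_bound[OF Ifun_pos] by blast

lemma good_Hm: "good k s (\<lambda>y. Hm k n y s)"
  unfolding good_def
  apply (intro conjI, measurable)
  apply (rule exI[where x="KK n / Ifun k s ^ n"], rule exI[where x=n])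
  unfolding Hm_hh using hh_bound[OF Ifun_pos] by (simp add: field_simps)

lemma good_bounded: assumes "f \<in> borel_measurable borel" "\<And>y. \<bar>f y\<bar> \<le> B" shows "good k s f"
  unfolding good_def
  apply (intro conjI assms(1))
  apply (rule exI[where x="B"], rule exI[where x="0::nat"])
  using assms(2) by simp


lemma Ifun_ge1_pow: "Ifun k s \<ge> 1 \<Longrightarrow> n \<le> N \<Longrightarrow> Ifun k s ^ n \<le> Ifun k s ^ N"
  by (rule power_increasing) simp_all

lemma Pm_mono_bound: assumes I1: "Ifun k s \<ge> 1"
  shows "\<bar>Pm k s n (\<lambda>y. y^e)\<bar> \<le> CC n e"
proof (cases "e < n")
  case True then show ?thesis using Pm_mono_lt CC_nonneg by simp
next
  case False
  have "\<bar>Pm k s n (\<lambda>y. y^e)\<bar> \<le> CC n e * (1 / Ifun k s ^ e) * Ifun k s ^ n"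
    by (rule Pm_bound) (rule mono_bound[OF Ifun_pos])
  also have "\<dots> = CC n e * (Ifun k s ^ n / Ifun k s ^ e)" by simp
  also have "\<dots> \<le> CC n e * 1"
    using False Ifun_ge1_pow[OF I1, of n e] Ifun_pos[of k s]
    by (intro mult_left_mono CC_nonneg) simp_all
  finally show ?thesis by simp
qed

definition Kmono :: "nat \<Rightarrow> nat \<Rightarrow> nat \<Rightarrow> real" where
  "Kmono n d m = (\<Sum>l = 0..m div 2. hc m l * CC n (m-2*l+d))"

lemma Pm_monoH_bound: assumes I1: "Ifun k s \<ge> 1"
  shows "\<bar>Pm k s n (\<lambda>y. y^d * Hm k m y s)\<bar> \<le> Kmono n d m"
proof -
  define I where "I = Ifun k s"
  have I0: "I > 0" using I1 unfolding I_def by simp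
  have e: "y^d * Hm k m y s = (\<Sum>l = 0..m div 2. (hc m l * aI I^l) * y^(m-2*l+d))" for y
    unfolding Hm_hh hh_def I_def sum_distrib_left
  proof (rule sum.cong)
    fix l
    have "y^(m-2*l+d) = y^(m-2*l) * y^d" by (rule power_add)
    then show "y ^ d * (hc m l * aI (Ifun k s) ^ l * y ^ (m - 2 * l)) = hc m l * aI (Ifun k s) ^ l * y ^ (m - 2 * l + d)"
      by (simp only: mult_ac)
  qed simp
  have "Pm k s n (\<lambda>y. y^d * Hm k m y s) = Pm k s n (\<lambda>y. \<Sum>l = 0..m div 2. (hc m l * aI I^l) * y^(m-2*l+d))"
    unfolding e ..
  also have "\<dots> = (\<Sum>l = 0..m div 2. Pm k s n (\<lambda>y. (hc m l * aI I^l) * y^(m-2*l+d)))"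
    by (rule Pm_sum) (auto intro!: good_cmult good_mono)
  also have "\<dots> = (\<Sum>l = 0..m div 2. (hc m l * aI I^l) * Pm k s n (\<lambda>y. y^(m-2*l+d)))"
    by (simp add: Pm_cmult)
  finally have "\<bar>Pm k s n (\<lambda>y. y^d * Hm k m y s)\<bar> \<le> (\<Sum>l = 0..m div 2. \<bar>(hc m l * aI I^l) * Pm k s n (\<lambda>y. y^(m-2*l+d))\<bar>)"
    using sum_abs by simp
  also have "\<dots> \<le> Kmono n d m" unfolding Kmono_def
  proof (rule sum_mono)
    fix l
    have a: "\<bar>aI I ^ l\<bar> \<le> 1"
    proof -
      have "1 / I\<^sup>2 \<le> 1" using I1 I_def by (simp add: power2_eq_square) (smt (verit) mult_le_cancel_left1)
      then have "\<bar>aI I\<bar> \<le> 1" by simp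
      then show ?thesis by (simp add: power_abs power_le_one)
    qed
    have "\<bar>(hc m l * aI I^l) * Pm k s n (\<lambda>y. y^(m-2*l+d))\<bar> = hc m l * (\<bar>aI I^l\<bar> * \<bar>Pm k s n (\<lambda>y. y^(m-2*l+d))\<bar>)"
      using hc_nonneg[of m l] by (simp add: abs_mult)
    also have "\<dots> \<le> hc m l * (1 * CC n (m-2*l+d))"
      using a Pm_mono_bound[OF I1, of n "m-2*l+d"]
      by (intro mult_left_mono hc_nonneg mult_mono) simp_all
    finally show "\<bar>(hc m l * aI I^l) * Pm k s n (\<lambda>y. y^(m-2*l+d))\<bar> \<le> hc m l * CC n (m-2*l+d)" by simp
  qed
  finally show ?thesis .
qed


lemma eb_den_pos: "(p::real) > 1 \<Longrightarrow> b > 0 \<Longrightarrow> p - 1 + b * (y::real)^(2*k) > 0"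
proof -
  assume a: "p > 1" "b > 0"
  have "y^(2*k) = (y\<^sup>2)^k" by (simp add: power_mult)
  then have "y^(2*k) \<ge> 0" by simp
  then have "b * y^(2*k) \<ge> 0" using a by simp
  then show ?thesis using a by linarith
qed

lemma E_bounds: assumes "p > 1" "b > 0"
  shows "0 \<le> y^(2*k) * e_b p k b y" "y^(2*k) * e_b p k b y \<le> 1 / b"
proof -
  have D: "p - 1 + b * y^(2*k) > 0" by (rule eb_den_pos[OF assms])
  have t: "y^(2*k) \<ge> 0" by (simp add: power_mult)
  show "0 \<le> y^(2*k) * e_b p k b y" unfolding e_b_def using D t by simp
  have "y^(2*k) / (p - 1 + b * y^(2*k)) \<le> 1 / b"
    using D t assms by (simp add: divide_simps)
  then show "y^(2*k) * e_b p k b y \<le> 1 / b" unfolding e_b_def by simp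
qed

lemma eb_meas[measurable]: "e_b p k b \<in> borel_measurable borel"
  unfolding e_b_def by measurable

lemma taylor: assumes "p > 1" "b > 0"
  shows "y^(2*k) * e_b p k b y = (\<Sum>j<J. (-b)^j / (p-1)^(j+1) * y^(2*k*(j+1))) + (-b/(p-1))^J * y^(2*k*J) * (y^(2*k) * e_b p k b y)"
proof (induction J)
  case 0 then show ?case by simp
next
  case (Suc J)
  define t where "t = y^(2*k)"
  define D where "D = p - 1 + b * t"
  have D0: "D > 0" unfolding D_def t_def by (rule eb_den_pos[OF assms])
  have p1: "p - 1 > 0" using assms by simp
  have Dt: "b * t = D - (p - 1)" unfolding D_def by simp
  have key: "t / D = t / (p-1) - (b/(p-1)) * t * (t / D)"
  proof -
    have "(b/(p-1)) * t * (t / D) = (b * t) * t / ((p-1) * D)" by simp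
    also have "\<dots> = (D - (p-1)) * t / ((p-1) * D)" unfolding Dt ..
    also have "\<dots> = t / (p-1) - t / D" using D0 p1 by (simp add: field_simps)
    finally show ?thesis by simp
  qed
  have eb: "y^(2*k) * e_b p k b y = t / D" unfolding t_def D_def e_b_def by simp
  have pw: "y^(2*k*(J+1)) = y^(2*k*J) * t" unfolding t_def by (simp add: power_add[symmetric] add.commute)
  define r where "r = -b/(p-1)"
  define z where "z = y^(2*k*J)"
  have r1: "r^J / (p-1) = (-b)^J / (p-1)^(J+1)" unfolding r_def power_divide by simp
  have r2: "- (r^J * (b/(p-1))) = r^(Suc J)" unfolding r_def by (simp add: field_simps)
  have "r^J * z * (t / D) = r^J * z * (t / (p-1)) + (- (r^J * (b/(p-1)))) * (z * t) * (t / D)"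
    by (subst key) (simp add: algebra_simps)
  also have "\<dots> = (r^J / (p-1)) * (z * t) + r^(Suc J) * (z * t) * (t / D)" unfolding r2 by simp
  finally have X: "r^J * z * (t / D) = (-b)^J / (p-1)^(J+1) * (z * t) + r^(Suc J) * (z * t) * (t / D)"
    unfolding r1 .
  have IH: "t / D = (\<Sum>j<J. (-b)^j / (p-1)^(j+1) * y^(2*k*(j+1))) + r^J * z * (t / D)"
    using Suc.IH unfolding eb r_def z_def .
  have "y^(2*k) * e_b p k b y = (\<Sum>j<J. (-b)^j / (p-1)^(j+1) * y^(2*k*(j+1))) + ((-b)^J / (p-1)^(J+1) * (z * t) + r^(Suc J) * (z * t) * (t / D))"
    unfolding eb using IH X by linarith
  also have "\<dots> = (\<Sum>j<Suc J. (-b)^j / (p-1)^(j+1) * y^(2*k*(j+1))) + r^(Suc J) * y^(2*k*(Suc J)) * (t / D)"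
  proof -
    have pw': "z * t = y^(2*k + 2*k*J)" unfolding z_def t_def by (simp add: power_add[symmetric] add.commute)
    show ?thesis by (simp add: pw')
  qed
  finally show ?case unfolding eb r_def .
qed

definition KEH :: "real \<Rightarrow> nat \<Rightarrow> real \<Rightarrow> nat \<Rightarrow> nat \<Rightarrow> real" where
  "KEH p k b0 n m = (\<Sum>j<n. (2*b0)^j / (p-1)^(j+1) * Kmono n (2*k*(j+1)) m)
     + (2*b0/(p-1))^n * (CC n (2*k*n+m) * (2/b0) * KK m)"

lemma good_E: assumes "p > 1" "b > 0" shows "good k s (\<lambda>y. y^(2*k) * e_b p k b y)"
  by (rule good_bounded[where B="1/b"]) (use E_bounds[OF assms] in \<open>auto simp: abs_le_iff\<close>)

lemma PmEH_bound:
  assumes p: "p > 1" and k: "k \<ge> 1" and b0: "b0 > 0" and b: "b0/2 \<le> b" "b \<le> 2*b0" and I1: "Ifun k s \<ge> 1"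
  shows "\<bar>Pm k s n (\<lambda>y. (y^(2*k) * e_b p k b y) * Hm k m y s)\<bar> \<le> KEH p k b0 n m"
proof -
  define I where "I = Ifun k s"
  have I0: "I > 0" using I1 I_def by simp
  have bpos: "b > 0" using b b0 by simp
  have p1: "p - 1 > 0" using p by simp
  let ?E = "\<lambda>y. y^(2*k) * e_b p k b y"
  have dec: "?E y * Hm k m y s = (\<Sum>j<n. (-b)^j / (p-1)^(j+1) * (y^(2*k*(j+1)) * Hm k m y s)) + (-b/(p-1))^n * (y^(2*k*n) * ?E y * Hm k m y s)" for y
  proof -
    have T: "?E y = (\<Sum>j<n. (-b)^j / (p-1)^(j+1) * y^(2*k*(j+1))) + (-b/(p-1))^n * y^(2*k*n) * ?E y"
      by (rule taylor[OF p bpos])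
    have "?E y * Hm k m y s = ((\<Sum>j<n. (-b)^j / (p-1)^(j+1) * y^(2*k*(j+1))) + (-b/(p-1))^n * y^(2*k*n) * ?E y) * Hm k m y s"
      using T by (rule arg_cong)
    also have "\<dots> = (\<Sum>j<n. (-b)^j / (p-1)^(j+1) * (y^(2*k*(j+1)) * Hm k m y s)) + (-b/(p-1))^n * (y^(2*k*n) * ?E y * Hm k m y s)"
      by (simp only: distrib_right sum_distrib_right mult.assoc)
    finally show ?thesis .
  qed
  have gR: "good k s (\<lambda>y. y^(2*k*n) * ?E y * Hm k m y s)"
    by (intro good_mult good_mono good_E p bpos good_Hm)
  have "Pm k s n (\<lambda>y. ?E y * Hm k m y s) = Pm k s n (\<lambda>y. (\<Sum>j<n. (-b)^j / (p-1)^(j+1) * (y^(2*k*(j+1)) * Hm k m y s)) + (-b/(p-1))^n * (y^(2*k*n) * ?E y * Hm k m y s))"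
    unfolding dec ..
  also have "\<dots> = (\<Sum>j<n. (-b)^j / (p-1)^(j+1) * Pm k s n (\<lambda>y. y^(2*k*(j+1)) * Hm k m y s)) + (-b/(p-1))^n * Pm k s n (\<lambda>y. y^(2*k*n) * ?E y * Hm k m y s)"
  proof -
    have gj: "good k s (\<lambda>y. (-b)^j / (p-1)^(j+1) * (y^(2*k*(j+1)) * Hm k m y s))" for j
      by (rule good_cmult, rule good_mult, rule good_mono, rule good_Hm)
    have g1: "good k s (\<lambda>y. \<Sum>j<n. (-b)^j / (p-1)^(j+1) * (y^(2*k*(j+1)) * Hm k m y s))"
      by (rule good_sum) (rule finite_lessThan, rule gj)
    have g2: "good k s (\<lambda>y. (-b/(p-1))^n * (y^(2*k*n) * ?E y * Hm k m y s))"
      by (rule good_cmult, rule gR)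
    show ?thesis
      unfolding Pm_add[OF g1 g2] Pm_sum[OF finite_lessThan gj] Pm_cmult ..
  qed
  finally have eq: "Pm k s n (\<lambda>y. ?E y * Hm k m y s) = \<dots>" .
  have t1: "\<bar>(-b)^j / (p-1)^(j+1) * Pm k s n (\<lambda>y. y^(2*k*(j+1)) * Hm k m y s)\<bar> \<le> (2*b0)^j / (p-1)^(j+1) * Kmono n (2*k*(j+1)) m" for j
  proof -
    have "\<bar>(-b)^j / (p-1)^(j+1)\<bar> = b^j / (p-1)^(j+1)" using bpos p1 by (simp add: power_abs abs_divide)
    also have "\<dots> \<le> (2*b0)^j / (p-1)^(j+1)" using bpos b p1 by (intro divide_right_mono power_mono) simp_all
    finally have c: "\<bar>(-b)^j / (p-1)^(j+1)\<bar> \<le> (2*b0)^j / (p-1)^(j+1)" .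
    show ?thesis unfolding abs_mult
      by (intro mult_mono c Pm_monoH_bound I1) (use b0 p1 in simp_all)
  qed
  have t2: "\<bar>Pm k s n (\<lambda>y. y^(2*k*n) * ?E y * Hm k m y s)\<bar> \<le> CC n (2*k*n+m) * (2/b0) * KK m"
  proof -
    have bd: "\<bar>y^(2*k*n) * ?E y * Hm k m y s\<bar> \<le> ((2/b0) * KK m / I^(2*k*n+m)) * (1 + (I * y)\<^sup>2)^(2*k*n+m)" for y
    proof -
      have "\<bar>y^(2*k*n) * ?E y * Hm k m y s\<bar> = \<bar>y^(2*k*n)\<bar> * \<bar>?E y\<bar> * \<bar>hh (aI I) m y\<bar>"
        unfolding Hm_hh I_def by (simp add: abs_mult)
      also have "\<dots> \<le> ((1 / I^(2*k*n)) * (1 + (I*y)\<^sup>2)^(2*k*n)) * (2/b0) * (KK m * (1 + (I*y)\<^sup>2)^m / I^m)"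
      proof (intro mult_mono mono_bound I0 hh_bound)
        show "\<bar>?E y\<bar> \<le> 2/b0"
        proof -
          have "1/b \<le> 2/b0" using b b0 bpos by (simp add: divide_simps)
          then show ?thesis using E_bounds[OF p bpos, of y k] by simp
        qed
      qed (use I0 b0 in \<open>simp_all add: KK_nonneg\<close>)
      also have "\<dots> = ((2/b0) * KK m / I^(2*k*n+m)) * (1 + (I * y)\<^sup>2)^(2*k*n+m)"
        by (simp add: power_add field_simps)
      finally show ?thesis .
    qed
    have "\<bar>Pm k s n (\<lambda>y. y^(2*k*n) * ?E y * Hm k m y s)\<bar> \<le> CC n (2*k*n+m) * ((2/b0) * KK m / I^(2*k*n+m)) * I^n"
      unfolding I_def by (rule Pm_bound) (use bd I_def in simp)
    also have "\<dots> = CC n (2*k*n+m) * ((2/b0) * KK m) * (I^n / I^(2*k*n+m))" by simp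
    also have "\<dots> \<le> CC n (2*k*n+m) * ((2/b0) * KK m) * 1"
    proof (intro mult_left_mono)
      have "n \<le> 2*k*n+m" using k by (simp add: trans_le_add1)
      then have "I^n \<le> I^(2*k*n+m)" using I1 I_def by (intro power_increasing) simp_all
      then show "I^n / I^(2*k*n+m) \<le> 1" using I0 by simp
    qed (use CC_nonneg KK_nonneg b0 in simp_all)
    finally show ?thesis by simp
  qed
  have t2': "\<bar>(-b/(p-1))^n * Pm k s n (\<lambda>y. y^(2*k*n) * ?E y * Hm k m y s)\<bar> \<le> (2*b0/(p-1))^n * (CC n (2*k*n+m) * (2/b0) * KK m)"
  proof -
    have "\<bar>(-b/(p-1))^n\<bar> \<le> (2*b0/(p-1))^n"
      unfolding power_abs using bpos b p1 by (intro power_mono) (simp_all add: abs_divide divide_right_mono)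
    then show ?thesis unfolding abs_mult by (intro mult_mono t2) simp_all
  qed
  have "\<bar>Pm k s n (\<lambda>y. ?E y * Hm k m y s)\<bar> \<le> (\<Sum>j<n. \<bar>(-b)^j / (p-1)^(j+1) * Pm k s n (\<lambda>y. y^(2*k*(j+1)) * Hm k m y s)\<bar>) + \<bar>(-b/(p-1))^n * Pm k s n (\<lambda>y. y^(2*k*n) * ?E y * Hm k m y s)\<bar>"
    unfolding eq by (rule order_trans[OF abs_triangle_ineq add_right_mono[OF sum_abs]])
  also have "\<dots> \<le> KEH p k b0 n m"
    unfolding KEH_def by (intro add_mono sum_mono t1 t2')
  finally show ?thesis .
qed


lemma Ifun_ge1: "k \<ge> 1 \<Longrightarrow> s \<ge> 0 \<Longrightarrow> Ifun k s \<ge> 1"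
  unfolding Ifun_def by (simp add: divide_simps)

lemma powr_le_pow: assumes "0 \<le> M" "M \<le> 2 * real N"
  shows "\<bar>u::real\<bar> powr M \<le> (1 + u\<^sup>2)^N"
proof (cases "\<bar>u\<bar> \<le> 1")
  case True
  have "\<bar>u\<bar> powr M \<le> 1"
    using True assms by (intro powr_le1) simp_all
  also have "1 \<le> (1 + u\<^sup>2)^N" by simp
  finally show ?thesis .
next
  case False
  have "\<bar>u\<bar> powr M \<le> \<bar>u\<bar> powr (2 * real N)" using False assms by (intro powr_mono) simp_all
  also have "\<dots> = \<bar>u\<bar> ^ (2*N)" using False by (simp add: powr_realpow[symmetric])
  also have "\<dots> = (u\<^sup>2)^N" by (simp add: power_mult power2_abs)
  also have "\<dots> \<le> (1 + u\<^sup>2)^N" by (intro power_mono) simp_all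
  finally show ?thesis .
qed

lemma good_diff: "good k s f \<Longrightarrow> good k s g \<Longrightarrow> good k s (\<lambda>y. f y - g y)"
  using good_add[of k s f "\<lambda>y. (-1) * g y"] good_cmult[of k s g "-1"] by simp

lemma Pm_diff: "good k s f \<Longrightarrow> good k s g \<Longrightarrow> Pm k s n (\<lambda>y. f y - g y) = Pm k s n f - Pm k s n g"
  using Pm_add[of k s f "\<lambda>y. (-1) * g y" n] good_cmult[of k s g "-1"] Pm_cmult[of k s n "-1" g] by simp

lemma M_pos: "p > 1 \<Longrightarrow> k \<ge> 1 \<Longrightarrow> Mexp p k > 2 * real k"
  unfolding Mexp_def by (simp add: divide_simps)

lemma brM_lt: assumes "p > 1" "k \<ge> 1" "n \<le> brM p k" shows "real n < Mexp p k"
proof -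
  have "real n \<le> real_of_int (\<lceil>Mexp p k\<rceil> - 1)"
    using assms M_pos[OF assms(1,2)] unfolding brM_def by linarith
  also have "\<dots> < Mexp p k" by linarith
  finally show ?thesis .
qed

lemma twok_le_brM: assumes "p > 1" "k \<ge> 1" shows "2*k \<le> brM p k"
proof -
  have "real (2*k) < Mexp p k" using M_pos[OF assms] by simp
  then have "int (2*k) < \<lceil>Mexp p k\<rceil>" by linarith
  then show ?thesis unfolding brM_def by linarith
qed


definition Ctot :: "real \<Rightarrow> nat \<Rightarrow> real \<Rightarrow> nat \<Rightarrow> real" where
  "Ctot p k b0 n = p/(p-1) * (CC n (2*k) + (\<Sum>m = 0..brM p k. KEH p k b0 n m) + CC n (nat \<lceil>Mexp p k\<rceil>) * (4/b0))"

lemma T1_bound: assumes I1: "Ifun k s \<ge> 1" and d: "0 < \<delta>" "\<delta> \<le> 1"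
  shows "\<bar>Pm k s n (\<lambda>y. y^(2*k)) - (if n = 2*k then 1 else 0)\<bar> \<le> CC n (2*k) * Ifun k s powr (-\<delta>)"
proof -
  define I where "I = Ifun k s"
  have I0: "I > 0" using I1 I_def by simp
  have pd: "I powr (-\<delta>) \<ge> 0" by simp
  consider "n = 2*k" | "n > 2*k" | "n < 2*k" by linarith
  then show ?thesis
  proof cases
    case 1 then show ?thesis using Pm_mono_eq[of k s "2*k"] CC_nonneg pd by simp
  next
    case 2 then show ?thesis using Pm_mono_lt[of "2*k" n k s] CC_nonneg pd by simp
  next
    case 3
    have "\<bar>Pm k s n (\<lambda>y. y^(2*k))\<bar> \<le> CC n (2*k) * (1 / I^(2*k)) * I^n"
      unfolding I_def by (rule Pm_bound) (rule mono_bound[OF Ifun_pos])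
    also have "\<dots> = CC n (2*k) * (I^n / I^(2*k))" by simp
    also have "\<dots> \<le> CC n (2*k) * I powr (-\<delta>)"
    proof (rule mult_left_mono[OF _ CC_nonneg])
      have "I^(n+1) \<le> I^(2*k)" using 3 I1 I_def by (intro power_increasing) simp_all
      then have "I^n / I^(2*k) \<le> I^n / I^(n+1)" using I0 by (intro divide_left_mono) simp_all
      also have "\<dots> = 1 / I" using I0 by simp
      also have "\<dots> = I powr (-1)" using I0 by (simp add: powr_minus divide_inverse)
      also have "\<dots> \<le> I powr (-\<delta>)" using I1 I_def d by (intro powr_mono) simp_all
      finally show "I^n / I^(2*k) \<le> I powr (-\<delta>)" .
    qed
    finally show ?thesis using 3 I_def by simp
  qed
qed

lemma snorm_pt: assumes "snorm p k s g \<le> ereal c"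
  shows "\<bar>g y\<bar> / (Ifun k s powr (- Mexp p k) + \<bar>y\<bar> powr Mexp p k) \<le> c"
  using assms unfolding snorm_def SUP_le_iff by simp

lemma main_bound:
  assumes p: "p > 1" and k: "k \<ge> 1" and b0: "b0 > 0" and d: "0 < \<delta>" "\<delta> \<le> 1"
    and I1: "Ifun k s \<ge> 1" and V: "inV p k \<delta> b0 s q b" and n: "n \<le> brM p k"
  shows "\<bar>Pm k s n (Mq p k b q) - (if n = 2*k then p/(p-1) else 0)\<bar> \<le> Ctot p k b0 n * Ifun k s powr (-\<delta>)"
proof -
  define I where "I = Ifun k s"
  define P where "P = p/(p-1)"
  define M where "M = Mexp p k"
  define R where "R = brM p k"
  define NM where "NM = nat \<lceil>M\<rceil>"
  have I0: "I > 0" using I1 I_def by simp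
  have Mpos: "M > 0" using M_pos[OF p k] M_def by simp
  have MNM: "M \<le> 2 * real NM" using Mpos unfolding NM_def by linarith
  have Ppos: "P > 0" using p P_def by simp
  have qmeas: "q \<in> borel_measurable borel"
    and qB: "\<exists>B. \<forall>y. \<bar>q y\<bar> \<le> B * (1 + \<bar>y\<bar> powr M)"
    and qm: "\<And>m. m \<le> R \<Longrightarrow> m \<noteq> 2*k \<Longrightarrow> \<bar>Pm k s m q\<bar> \<le> I powr (-\<delta>)"
    and q2k: "\<bar>Pm k s (2*k) q\<bar> \<le> I powr (- 2 * \<delta>)"
    and sn: "snorm p k s (q_minus p k s q) \<le> ereal (I powr (-\<delta>))"
    and b1: "b0/2 \<le> b" and b2: "b \<le> 2*b0"
    using V unfolding inV_def I_def M_def R_def by auto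
  have bpos: "b > 0" using b1 b0 by simp
  have qm': "\<bar>Pm k s m q\<bar> \<le> I powr (-\<delta>)" if "m \<le> R" for m
  proof (cases "m = 2*k")
    case True
    have "I powr (- 2 * \<delta>) \<le> I powr (-\<delta>)" using I1 I_def d by (intro powr_mono) simp_all
    then show ?thesis using q2k True by simp
  next
    case False then show ?thesis using qm that by simp
  qed
  obtain B where B: "\<And>y. \<bar>q y\<bar> \<le> B * (1 + \<bar>y\<bar> powr M)" using qB by blast
  have B0: "B \<ge> 0" using B[of 0] Mpos abs_ge_zero[of "q 0"] by simp
  have pw: "\<bar>y\<bar> powr M \<le> (1 + (I*y)\<^sup>2)^NM" for y
  proof -
    have "\<bar>y\<bar> \<le> \<bar>I*y\<bar>" using I1 I_def by (simp add: abs_mult mult_le_cancel_right1)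
    then have "\<bar>y\<bar> powr M \<le> \<bar>I*y\<bar> powr M" using Mpos by (intro powr_mono2) simp_all
    also have "\<dots> \<le> (1 + (I*y)\<^sup>2)^NM" using Mpos MNM by (intro powr_le_pow) simp_all
    finally show ?thesis .
  qed
  have one_le: "1 \<le> (1 + (I*y)\<^sup>2)^NM" for y by simp
  have gq: "good k s q"
    unfolding good_def
  proof (intro conjI qmeas exI allI)
    fix y
    have "\<bar>q y\<bar> \<le> B * (1 + \<bar>y\<bar> powr M)" by (rule B)
    also have "\<dots> \<le> B * (2 * (1 + (I*y)\<^sup>2)^NM)"
    proof (rule mult_left_mono[OF _ B0])
      show "1 + \<bar>y\<bar> powr M \<le> 2 * (1 + (I*y)\<^sup>2)^NM" using pw[of y] one_le[of y] by linarith
    qed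
    finally show "\<bar>q y\<bar> \<le> (2*B) * (1 + (Ifun k s * y)\<^sup>2)^NM" unfolding I_def by simp
  qed
  define Q where "Q y = (\<Sum>m = 0..R. Pm k s m q * Hm k m y s)" for y
  have gQ: "good k s Q" unfolding Q_def
    by (rule good_sum) (simp, rule good_cmult, rule good_Hm)
  define qmi where "qmi = q_minus p k s q"
  have qmi_eq: "qmi y = q y - Q y" for y unfolding qmi_def q_minus_def Q_def R_def by simp
  have gqmi: "good k s qmi"
  proof -
    have "good k s (\<lambda>y. q y - Q y)" by (rule good_diff[OF gq gQ])
    moreover have "qmi = (\<lambda>y. q y - Q y)" using qmi_eq by auto
    ultimately show ?thesis by simp
  qed
  let ?E = "\<lambda>y. y^(2*k) * e_b p k b y"
  have gE: "good k s ?E" by (rule good_E[OF p bpos])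
  have Ebd: "\<bar>?E y\<bar> \<le> 2/b0" for y
  proof -
    have "1/b \<le> 2/b0" using b1 b0 bpos by (simp add: divide_simps)
    then show ?thesis using E_bounds[OF p bpos, of y k] by simp
  qed
  have dec: "Mq p k b q y = P * y^(2*k) + (P * (\<Sum>m = 0..R. Pm k s m q * (?E y * Hm k m y s)) + P * (?E y * qmi y))" for y
  proof -
    have s1: "?E y * Q y = (\<Sum>m = 0..R. Pm k s m q * (?E y * Hm k m y s))"
      unfolding Q_def sum_distrib_left by (simp add: mult_ac)
    have "Mq p k b q y = P * y^(2*k) + P * (?E y * q y)" unfolding Mq_def P_def by (simp add: algebra_simps add_divide_distrib)
    also have "?E y * q y = ?E y * Q y + ?E y * qmi y" unfolding qmi_eq by (simp add: algebra_simps)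
    finally show ?thesis unfolding s1 by (simp add: algebra_simps)
  qed
  have gEH: "good k s (\<lambda>y. ?E y * Hm k m y s)" for m by (rule good_mult[OF gE good_Hm])
  have gS: "good k s (\<lambda>y. \<Sum>m = 0..R. Pm k s m q * (?E y * Hm k m y s))"
    by (rule good_sum) (simp, rule good_cmult, rule gEH)
  have gEq: "good k s (\<lambda>y. ?E y * qmi y)" by (rule good_mult[OF gE gqmi])
  have lin: "Pm k s n (Mq p k b q) = P * Pm k s n (\<lambda>y. y^(2*k)) + (P * (\<Sum>m = 0..R. Pm k s m q * Pm k s n (\<lambda>y. ?E y * Hm k m y s)) + P * Pm k s n (\<lambda>y. ?E y * qmi y))"
  proof -
    have "Pm k s n (Mq p k b q) = Pm k s n (\<lambda>y. P * y^(2*k) + (P * (\<Sum>m = 0..R. Pm k s m q * (?E y * Hm k m y s)) + P * (?E y * qmi y)))"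
      using dec by (intro Pm_cong) simp
    also have "\<dots> = Pm k s n (\<lambda>y. P * y^(2*k)) + (Pm k s n (\<lambda>y. P * (\<Sum>m = 0..R. Pm k s m q * (?E y * Hm k m y s))) + Pm k s n (\<lambda>y. P * (?E y * qmi y)))"
      by (subst Pm_add, rule good_cmult[OF good_mono], rule good_add[OF good_cmult[OF gS] good_cmult[OF gEq]],
          subst Pm_add, rule good_cmult[OF gS], rule good_cmult[OF gEq], rule refl)
    also have "\<dots> = P * Pm k s n (\<lambda>y. y^(2*k)) + (P * (\<Sum>m = 0..R. Pm k s m q * Pm k s n (\<lambda>y. ?E y * Hm k m y s)) + P * Pm k s n (\<lambda>y. ?E y * qmi y))"
      unfolding Pm_cmult Pm_sum[OF finite_atLeastAtMost good_cmult[OF gEH]] by simp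
    finally show ?thesis .
  qed
  have T1: "\<bar>Pm k s n (\<lambda>y. y^(2*k)) - (if n = 2*k then 1 else 0)\<bar> \<le> CC n (2*k) * I powr (-\<delta>)"
    unfolding I_def by (rule T1_bound[OF I1 d])
  have T2: "\<bar>\<Sum>m = 0..R. Pm k s m q * Pm k s n (\<lambda>y. ?E y * Hm k m y s)\<bar> \<le> (\<Sum>m = 0..R. KEH p k b0 n m) * I powr (-\<delta>)"
  proof -
    have "\<bar>\<Sum>m = 0..R. Pm k s m q * Pm k s n (\<lambda>y. ?E y * Hm k m y s)\<bar> \<le> (\<Sum>m = 0..R. \<bar>Pm k s m q * Pm k s n (\<lambda>y. ?E y * Hm k m y s)\<bar>)"
      by (rule sum_abs)
    also have "\<dots> \<le> (\<Sum>m = 0..R. I powr (-\<delta>) * KEH p k b0 n m)"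
    proof (rule sum_mono)
      fix m assume "m \<in> {0..R}"
      then have mR: "m \<le> R" by simp
      show "\<bar>Pm k s m q * Pm k s n (\<lambda>y. ?E y * Hm k m y s)\<bar> \<le> I powr (-\<delta>) * KEH p k b0 n m"
        unfolding abs_mult
        by (intro mult_mono qm'[OF mR] PmEH_bound[OF p k b0 b1 b2 I1]) simp_all
    qed
    also have "\<dots> = (\<Sum>m = 0..R. KEH p k b0 n m) * I powr (-\<delta>)" by (simp add: sum_distrib_left mult.commute)
    finally show ?thesis .
  qed
  have T3: "\<bar>Pm k s n (\<lambda>y. ?E y * qmi y)\<bar> \<le> CC n NM * (4/b0) * I powr (-\<delta>)"
  proof -
    have qb: "\<bar>qmi y\<bar> \<le> (2 * I powr (-\<delta>) * I powr (-M)) * (1 + (I*y)\<^sup>2)^NM" for y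
    proof -
      have den: "I powr (-M) + \<bar>y\<bar> powr M > 0" using I0 by (simp add: add_pos_nonneg)
      have "\<bar>qmi y\<bar> / (I powr (-M) + \<bar>y\<bar> powr M) \<le> I powr (-\<delta>)"
        using snorm_pt[OF sn[folded qmi_def], of y] unfolding I_def M_def .
      then have a: "\<bar>qmi y\<bar> \<le> I powr (-\<delta>) * (I powr (-M) + \<bar>y\<bar> powr M)"
        using den by (simp add: divide_le_eq)
      have e: "\<bar>y\<bar> powr M = I powr (-M) * \<bar>I*y\<bar> powr M"
      proof -
        have "\<bar>I*y\<bar> powr M = I powr M * \<bar>y\<bar> powr M" using I0 by (simp add: abs_mult powr_mult)
        moreover have "I powr (-M) * I powr M = 1" using I0 by (simp add: powr_add[symmetric])
        ultimately show ?thesis by (simp add: mult.assoc[symmetric])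
      qed
      have "I powr (-M) + \<bar>y\<bar> powr M = I powr (-M) * (1 + \<bar>I*y\<bar> powr M)" unfolding e by (simp add: algebra_simps)
      also have "\<dots> \<le> I powr (-M) * (2 * (1 + (I*y)\<^sup>2)^NM)"
      proof (rule mult_left_mono)
        have "\<bar>I*y\<bar> powr M \<le> (1 + (I*y)\<^sup>2)^NM" using Mpos MNM by (intro powr_le_pow) simp_all
        then show "1 + \<bar>I*y\<bar> powr M \<le> 2 * (1 + (I*y)\<^sup>2)^NM" using one_le[of y] by linarith
      qed simp
      finally have "I powr (-M) + \<bar>y\<bar> powr M \<le> I powr (-M) * (2 * (1 + (I*y)\<^sup>2)^NM)" .
      then have "I powr (-\<delta>) * (I powr (-M) + \<bar>y\<bar> powr M) \<le> I powr (-\<delta>) * (I powr (-M) * (2 * (1 + (I*y)\<^sup>2)^NM))"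
        by (rule mult_left_mono) simp
      then have "\<bar>qmi y\<bar> \<le> I powr (-\<delta>) * (I powr (-M) * (2 * (1 + (I*y)\<^sup>2)^NM))"
        using a by linarith
      then show ?thesis by (simp add: mult_ac)
    qed
    have bd: "\<bar>?E y * qmi y\<bar> \<le> ((4/b0) * I powr (-\<delta>) * I powr (-M)) * (1 + (Ifun k s * y)\<^sup>2)^NM" for y
    proof -
      have "\<bar>?E y * qmi y\<bar> \<le> (2/b0) * ((2 * I powr (-\<delta>) * I powr (-M)) * (1 + (I*y)\<^sup>2)^NM)"
        unfolding abs_mult[of "?E y" "qmi y"] by (intro mult_mono Ebd qb) (use b0 in simp_all)
      then show ?thesis unfolding I_def by (simp add: mult_ac)
    qed
    have "\<bar>Pm k s n (\<lambda>y. ?E y * qmi y)\<bar> \<le> CC n NM * ((4/b0) * I powr (-\<delta>) * I powr (-M)) * Ifun k s ^ n"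
      by (rule Pm_bound) (rule bd)
    also have "\<dots> = CC n NM * (4/b0) * I powr (-\<delta>) * (I powr (-M) * I ^ n)" unfolding I_def by (simp add: mult_ac)
    also have "\<dots> \<le> CC n NM * (4/b0) * I powr (-\<delta>) * 1"
    proof (rule mult_left_mono)
      have "I ^ n = I powr (real n)" using I0 by (simp add: powr_realpow)
      then have "I powr (-M) * I ^ n = I powr (real n - M)" using I0 by (simp add: powr_add[symmetric])
      also have "\<dots> \<le> I powr 0" using brM_lt[OF p k n] M_def I1 I_def by (intro powr_mono) simp_all
      finally show "I powr (-M) * I ^ n \<le> 1" using I0 by simp
    qed (use CC_nonneg b0 in simp)
    finally show ?thesis by simp
  qed
  let ?A = "Pm k s n (\<lambda>y. y^(2*k)) - (if n = 2*k then 1 else 0)"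
  let ?S = "\<Sum>m = 0..R. Pm k s m q * Pm k s n (\<lambda>y. ?E y * Hm k m y s)"
  let ?F = "Pm k s n (\<lambda>y. ?E y * qmi y)"
  have EQ: "Pm k s n (Mq p k b q) - (if n = 2*k then p/(p-1) else 0) = P * ?A + P * ?S + P * ?F"
    unfolding lin P_def by (simp add: algebra_simps)
  have "\<bar>P * ?A + P * ?S + P * ?F\<bar> \<le> \<bar>P * ?A\<bar> + \<bar>P * ?S\<bar> + \<bar>P * ?F\<bar>"
    using abs_triangle_ineq[of "P * ?A + P * ?S" "P * ?F"] abs_triangle_ineq[of "P * ?A" "P * ?S"] by linarith
  also have "\<dots> = P * \<bar>?A\<bar> + P * \<bar>?S\<bar> + P * \<bar>?F\<bar>" using Ppos by (simp add: abs_mult)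
  also have "\<dots> \<le> P * (CC n (2*k) * I powr (-\<delta>)) + P * ((\<Sum>m = 0..R. KEH p k b0 n m) * I powr (-\<delta>)) + P * (CC n NM * (4/b0) * I powr (-\<delta>))"
    using Ppos T1 T2 T3 by (intro add_mono mult_left_mono) simp_all
  also have "\<dots> = Ctot p k b0 n * I powr (-\<delta>)"
    unfolding Ctot_def P_def R_def NM_def M_def by (simp add: algebra_simps)
  finally show ?thesis unfolding EQ I_def .
qed


lemma Kmono_nonneg: "Kmono n d m \<ge> 0" unfolding Kmono_def
  by (intro sum_nonneg mult_nonneg_nonneg hc_nonneg CC_nonneg)

lemma KEH_nonneg: "p > 1 \<Longrightarrow> b0 > 0 \<Longrightarrow> KEH p k b0 n m \<ge> 0" unfolding KEH_def
  by (intro add_nonneg_nonneg sum_nonneg mult_nonneg_nonneg divide_nonneg_nonneg Kmono_nonneg CC_nonneg KK_nonneg) simp_all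

lemma Ctot_nonneg: "p > 1 \<Longrightarrow> b0 > 0 \<Longrightarrow> Ctot p k b0 n \<ge> 0" unfolding Ctot_def
  by (intro mult_nonneg_nonneg add_nonneg_nonneg sum_nonneg KEH_nonneg CC_nonneg) simp_all

theorem mainTheorem9:
  fixes p :: real and k :: nat and b0 :: real
  assumes "p > 1" and "k \<ge> 2" and "b0 > 0"
  shows "\<exists>\<delta>6 > 0. \<forall>\<delta>. 0 < \<delta> \<and> \<delta> < \<delta>6 \<longrightarrow>
    (\<exists>s6 \<ge> 1. \<exists>C > 0. \<forall>s0 \<ge> s6. \<forall>sbar. \<forall>(q :: real \<Rightarrow> real \<Rightarrow> real) (b :: real \<Rightarrow> real).
      (\<forall>s \<in> {s0..sbar}. inV p k \<delta> b0 s (q s) (b s)) \<longrightarrow>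
      (\<forall>s \<in> {s0..sbar}.
         \<bar>Pm k s (2 * k) (Mq p k (b s) (q s)) - p / (p - 1)\<bar> \<le> C * Ifun k s powr (- \<delta>) \<and>
         (\<forall>n \<le> brM p k. n \<noteq> 2 * k \<longrightarrow>
            \<bar>Pm k s n (Mq p k (b s) (q s))\<bar> \<le> C * Ifun k s powr (- \<delta>))))"
proof (rule exI[where x="1::real"], intro conjI allI impI)
  fix \<delta> :: real assume d: "0 < \<delta> \<and> \<delta> < 1"
  have p: "p > 1" and k: "k \<ge> 1" and b0: "b0 > 0" using assms by simp_all
  define C where "C = 1 + (\<Sum>n\<le>brM p k. Ctot p k b0 n)"
  have Cge: "Ctot p k b0 n \<le> C" if "n \<le> brM p k" for n
  proof -
    have "Ctot p k b0 n \<le> (\<Sum>n\<le>brM p k. Ctot p k b0 n)"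
      by (rule member_le_sum) (use that Ctot_nonneg[OF p b0] in auto)
    then show ?thesis unfolding C_def by simp
  qed
  have Cpos: "C > 0" unfolding C_def using Ctot_nonneg[OF p b0] by (simp add: add_pos_nonneg sum_nonneg)
  have key: "\<bar>Pm k s (2 * k) (Mq p k (b s) (q s)) - p / (p - 1)\<bar> \<le> C * Ifun k s powr - \<delta> \<and>
         (\<forall>n\<le>brM p k. n \<noteq> 2 * k \<longrightarrow> \<bar>Pm k s n (Mq p k (b s) (q s))\<bar> \<le> C * Ifun k s powr - \<delta>)"
    if s0: "1 \<le> s0" and V: "\<forall>s\<in>{s0..sbar}. inV p k \<delta> b0 s (q s) (b s)" and s: "s \<in> {s0..sbar}"
    for s0 sbar :: real and q :: "real \<Rightarrow> real \<Rightarrow> real" and b :: "real \<Rightarrow> real" and s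
  proof
    have I1: "Ifun k s \<ge> 1" using s s0 k by (intro Ifun_ge1) auto
    have Vs: "inV p k \<delta> b0 s (q s) (b s)" using V s by blast
    have dd: "0 < \<delta>" "\<delta> \<le> 1" using d by simp_all
    have ip: "Ifun k s powr - \<delta> \<ge> 0" by simp
    have "\<bar>Pm k s (2 * k) (Mq p k (b s) (q s)) - p / (p - 1)\<bar> \<le> Ctot p k b0 (2*k) * Ifun k s powr - \<delta>"
      using main_bound[OF p k b0 dd I1 Vs twok_le_brM[OF p k]] by simp
    also have "\<dots> \<le> C * Ifun k s powr - \<delta>" using Cge[OF twok_le_brM[OF p k]] ip by (rule mult_right_mono)
    finally show "\<bar>Pm k s (2 * k) (Mq p k (b s) (q s)) - p / (p - 1)\<bar> \<le> C * Ifun k s powr - \<delta>" .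
    show "\<forall>n\<le>brM p k. n \<noteq> 2 * k \<longrightarrow> \<bar>Pm k s n (Mq p k (b s) (q s))\<bar> \<le> C * Ifun k s powr - \<delta>"
    proof (intro allI impI)
      fix n assume n: "n \<le> brM p k" and n2: "n \<noteq> 2*k"
      have "\<bar>Pm k s n (Mq p k (b s) (q s))\<bar> \<le> Ctot p k b0 n * Ifun k s powr - \<delta>"
        using main_bound[OF p k b0 dd I1 Vs n] n2 by simp
      also have "\<dots> \<le> C * Ifun k s powr - \<delta>" using Cge[OF n] ip by (rule mult_right_mono)
      finally show "\<bar>Pm k s n (Mq p k (b s) (q s))\<bar> \<le> C * Ifun k s powr - \<delta>" .
    qed
  qed
  show "\<exists>s6\<ge>1. \<exists>C>0. \<forall>s0\<ge>s6. \<forall>sbar q b. (\<forall>s\<in>{s0..sbar}. inV p k \<delta> b0 s (q s) (b s)) \<longrightarrow>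
      (\<forall>s\<in>{s0..sbar}. \<bar>Pm k s (2 * k) (Mq p k (b s) (q s)) - p / (p - 1)\<bar> \<le> C * Ifun k s powr - \<delta> \<and>
         (\<forall>n\<le>brM p k. n \<noteq> 2 * k \<longrightarrow> \<bar>Pm k s n (Mq p k (b s) (q s))\<bar> \<le> C * Ifun k s powr - \<delta>))"
    apply (rule exI[where x="1::real"])
    apply (rule conjI, simp)
    apply (rule exI[where x=C])
    apply (rule conjI, rule Cpos)
    using key by blast
qed simp


end
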